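(* If $\lambda,\mu\in\Xi$ are circuits in $\Lambda$ and $V_0\cap F_\lambda\cap F_\mu\neq\emptyset$, then $\lambda$ and $\mu$ are consistent, i.e. $\lambda_e\mu_e\ge0$ for all $e\in E$.
   Context: Let $\mathcal M$ be a regular matroid on a finite ground set $E$, represented by a totally unimodular matrix $M$; $\mathcal F=\ker M\subseteq\mathbb R^E$ with Euclidean inner product, $\Lambda=\ker M\cap\mathbb Z^E$, $V_0=\{x\in\mathcal F:\|x\|\le\|x-\mu\|\ \forall\mu\in\Lambda\}$. A nonzero flow is Eulerian if all coordinates lie in $\{-1,0,1\}$; a circuit in $\Lambda$ is an Eulerian flow whose support is a circuit (minimal dependent set of columns) of $\mathcal M$; $\Xi$ is the set of circuits in $\Lambda$. For $\gamma\in\Xi$, $F_\gamma=\{x\in\mathcal F:2\langle x,\gamma\rangle=\|\gamma\|^2\}$. *)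

theory Defs
  imports "HOL-Analysis.Analysis"
begin

text \<open>Ground set E is the finite index type 'e; rows of the representing matrix are
  indexed by the finite type 'r.  Vectors in R^E are elements of real^'e with the
  Euclidean inner product.\<close>

definition det_nat :: "nat \<Rightarrow> (nat \<Rightarrow> nat \<Rightarrow> real) \<Rightarrow> real" where
  "det_nat k A = (\<Sum>p | p permutes {..<k}. of_int (sign p) * (\<Prod>i<k. A i (p i)))"

definition totally_unimodular :: "real^'e^'r \<Rightarrow> bool" where
  "totally_unimodular M \<longleftrightarrow>
     (\<forall>k (f::nat \<Rightarrow> 'r) (g::nat \<Rightarrow> 'e). inj_on f {..<k} \<longrightarrow> inj_on g {..<k} \<longrightarrow>
        det_nat k (\<lambda>i j. M $ f i $ g j) \<in> {-1, 0, 1})"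

definition flows :: "real^'e^'r \<Rightarrow> (real^'e) set" where
  "flows M = {x. M *v x = 0}"

definition flow_lattice :: "real^'e^'r \<Rightarrow> (real^'e) set" where
  "flow_lattice M = {x \<in> flows M. \<forall>e. x $ e \<in> \<int>}"

definition voronoi0 :: "real^'e^'r \<Rightarrow> (real^'e) set" where
  "voronoi0 M = {x \<in> flows M. \<forall>\<mu>\<in>flow_lattice M. norm x \<le> norm (x - \<mu>)}"

definition dependent_cols :: "real^'e^'r \<Rightarrow> 'e set \<Rightarrow> bool" where
  "dependent_cols M S \<longleftrightarrow>
     (\<exists>c::'e \<Rightarrow> real. (\<exists>e\<in>S. c e \<noteq> 0) \<and> (\<forall>r. (\<Sum>e\<in>S. c e * M $ r $ e) = 0))"

definition matroid_circuit :: "real^'e^'r \<Rightarrow> 'e set \<Rightarrow> bool" where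
  "matroid_circuit M S \<longleftrightarrow> dependent_cols M S \<and> (\<forall>T. T \<subset> S \<longrightarrow> \<not> dependent_cols M T)"

definition support :: "real^'e \<Rightarrow> 'e set" where
  "support x = {e. x $ e \<noteq> 0}"

definition eulerian :: "real^'e^'r \<Rightarrow> real^'e \<Rightarrow> bool" where
  "eulerian M x \<longleftrightarrow> x \<in> flow_lattice M \<and> x \<noteq> 0 \<and> (\<forall>e. x $ e \<in> {-1, 0, 1})"

definition lattice_circuits :: "real^'e^'r \<Rightarrow> (real^'e) set" where
  "lattice_circuits M = {x. eulerian M x \<and> matroid_circuit M (support x)}"

definition facet_hyp :: "real^'e^'r \<Rightarrow> real^'e \<Rightarrow> (real^'e) set" where
  "facet_hyp M \<gamma> = {x \<in> flows M. 2 * (x \<bullet> \<gamma>) = (norm \<gamma>)\<^sup>2}"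

end

theory Submission imports Defs "Jordan_Normal_Form.Determinant" begin

lemma rows_exist:
  fixes M :: "real^'e^'r" and D :: "'e set"
  assumes indep: "\<And>w. M *v w = 0 \<Longrightarrow> (\<forall>e. e \<notin> D \<longrightarrow> w$e = 0) \<Longrightarrow> w = 0"
  shows "\<exists>f g. inj_on f {..<card D} \<and> bij_betw g {..<card D} D \<and>
     Determinant.det (Matrix.mat (card D) (card D) (\<lambda>(i,j). M$f i$g j)) \<noteq> 0"
proof -
  define \<rho> where "\<rho> r = (\<chi> e. if e \<in> D then M$r$e else 0)" for r
  define S where "S = range \<rho>"
  define T where "T = (\<lambda>e. axis e (1::real)) ` D"
  have finD: "finite D" by simp
  have rho_sum: "\<rho> r = (\<Sum>e\<in>D. (M$r$e) *\<^sub>R axis e 1)" for r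
    unfolding \<rho>_def Finite_Cartesian_Product.vec_eq_iff by (simp add: sum_component axis_def if_distrib sum.delta cong: if_cong)
  have ST: "span S \<subseteq> span T"
  proof (rule span_minimal)
    show "S \<subseteq> span T" unfolding S_def
    proof
      fix x assume "x \<in> range \<rho>" then obtain r where x: "x = \<rho> r" by auto
      show "x \<in> span T" unfolding x rho_sum T_def
        by (intro span_sum span_scale span_base) auto
    qed
  qed (rule subspace_span)
  have TS: "span T \<subseteq> span S"
  proof (rule ccontr)
    assume "\<not> ?thesis"
    with ST have "span S \<subset> span T" by auto
    then obtain x where x: "x \<noteq> 0" "x \<in> span T" "\<And>y. y \<in> span S \<Longrightarrow> real_inner_class.orthogonal x y"
      by (erule orthogonal_to_subspace_exists_gen)
    have "span T \<subseteq> {v. \<forall>e. e \<notin> D \<longrightarrow> v$e = 0}"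
      by (rule span_minimal) (auto simp: T_def axis_def subspace_def)
    with x(2) have xD: "\<forall>e. e \<notin> D \<longrightarrow> x$e = 0" by auto
    have "M *v x = 0"
    proof (subst Finite_Cartesian_Product.vec_eq_iff, intro allI)
      fix r
      have "real_inner_class.orthogonal x (\<rho> r)" using x(3)[OF span_base[of "\<rho> r" S]] S_def by auto
      hence "(\<Sum>e\<in>UNIV. x$e * \<rho> r $ e) = 0" by (simp add: real_inner_class.orthogonal_def inner_vec_def)
      moreover have "x$e * \<rho> r $ e = M$r$e * x$e" for e using xD by (auto simp: \<rho>_def)
      ultimately show "(M *v x) $ r = 0 $ r" by (simp add: matrix_vector_mult_def)
    qed
    with indep xD x(1) show False by auto
  qed
  have indT: "independent T"
    by (rule independent_mono[OF independent_Basis]) (auto simp: T_def Basis_vec_def)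
  have cardT: "card T = card D" by (simp add: T_def card_image inj_on_def axis_eq_axis)
  have dimS: "dim S = card D"
  proof -
    have "dim S = dim (span S)" by (simp add: dim_span)
    also have "span S = span T" using ST TS by auto
    also have "dim (span T) = card T" using indep_card_eq_dim_span[OF indT] by simp
    finally show ?thesis using cardT by simp
  qed
  obtain B where B: "B \<subseteq> S" "independent B" "S \<subseteq> span B" "card B = dim S" by (rule basis_exists)
  obtain R where R: "inj_on \<rho> R" "B = \<rho> ` R" using B(1) subset_image_inj[of B \<rho> UNIV] S_def by auto
  have cardR: "card R = card D" using card_image[OF R(1)] R(2) B(4) dimS by simp
  obtain f where f: "bij_betw f {0..<card R} R" using ex_bij_betw_nat_finite[of R] by auto
  obtain g where g: "bij_betw g {0..<card D} D" using ex_bij_betw_nat_finite[of D] by auto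
  define n where "n = card D"
  define A where "A = Matrix.mat n n (\<lambda>(i,j). M$f i$g j)"
  have A: "A \<in> carrier_mat n n" unfolding A_def by simp
  have "Determinant.det A \<noteq> 0"
  proof
    assume "Determinant.det A = 0"
    then have "Determinant.det (transpose_mat A) = 0" using det_transpose[OF A] by simp
    then obtain v where v: "v \<in> carrier_vec n" "v \<noteq> 0\<^sub>v n" "transpose_mat A *\<^sub>v v = 0\<^sub>v n"
      using det_0_iff_vec_prod_zero_field[of "transpose_mat A" n] A by auto
    have col: "(\<Sum>i<n. v $ i * M$f i$g j) = 0" if "j<n" for j
    proof -
      have "(transpose_mat A *\<^sub>v v) $ j = 0" using v(3) that by simp
      thus ?thesis using that v(1) A
        by (simp add: scalar_prod_def A_def atLeast0LessThan mult.commute)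
    qed
    have lin: "(\<Sum>i<n. v $ i *\<^sub>R \<rho> (f i)) = 0"
    proof (subst Finite_Cartesian_Product.vec_eq_iff, intro allI)
      fix e
      show "(\<Sum>i<n. v $ i *\<^sub>R \<rho> (f i)) $ e = 0 $ e"
      proof (cases "e \<in> D")
        case True
        then obtain j where j: "j < n" "e = g j" using g unfolding n_def bij_betw_def by (metis atLeastLessThan_iff imageE)
        show ?thesis using col[OF j(1)] True j by (simp add: sum_component \<rho>_def)
      next
        case False
        thus ?thesis by (simp add: sum_component \<rho>_def)
      qed
    qed
    have nR: "card R = n" using cardR n_def by simp
    have bijB: "bij_betw (\<rho> \<circ> f) {..<n} B"
      using bij_betw_trans[OF f[unfolded nR] bij_betw_imageI[OF R(1) R(2)[symmetric]]] R(2) 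
      by (simp add: atLeast0LessThan bij_betw_def)
    obtain i0 where i0: "i0 < n" "v $ i0 \<noteq> 0"
      using v(1,2) by (metis carrier_vecD eq_vecI index_zero_vec(1,2))
    define u where "u b = v $ (inv_into {..<n} (\<rho> \<circ> f) b)" for b
    have invf: "inv_into {..<n} (\<rho> \<circ> f) (\<rho> (f i)) = i" if "i < n" for i
      using inv_into_f_f[of "\<rho> \<circ> f" "{..<n}" i] bijB that unfolding bij_betw_def by simp
    have "dependent B"
    proof -
      have finB: "finite B" using bijB bij_betw_finite by blast
      have "(\<Sum>b\<in>B. u b *\<^sub>R b) = (\<Sum>i<n. u ((\<rho> \<circ> f) i) *\<^sub>R (\<rho> \<circ> f) i)"
        using bijB unfolding bij_betw_def by (metis (no_types, lifting) sum.reindex_cong)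
      also have "\<dots> = (\<Sum>i<n. v $ i *\<^sub>R \<rho> (f i))"
        using bijB by (intro sum.cong) (auto simp: u_def invf)
      finally have s0: "(\<Sum>b\<in>B. u b *\<^sub>R b) = 0" using lin by simp
      have "u ((\<rho> \<circ> f) i0) \<noteq> 0" using i0 bijB by (auto simp: u_def invf)
      moreover have "(\<rho> \<circ> f) i0 \<in> B" using bijB i0 by (auto simp: bij_betw_def)
      ultimately show ?thesis using s0 finB dependent_finite by blast
    qed
    with B(2) show False by simp
  qed
  moreover have "inj_on f {..<card D}" using f cardR bij_betw_imp_inj_on by (metis atLeast0LessThan)
  moreover have "bij_betw g {..<card D} D" using g by (simp add: atLeast0LessThan)
  ultimately show ?thesis unfolding A_def n_def by blast
qed

lemma det_nat_eq: "Determinant.det (Matrix.mat n n (\<lambda>(i,j). F i j)) = det_nat n F"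
proof -
  have "Determinant.det (Matrix.mat n n (\<lambda>(i,j). F i j)) =
    (\<Sum>p | p permutes {0..<n}. of_int (sign p) * (\<Prod>i = 0..<n. Matrix.mat n n (\<lambda>(i,j). F i j) $$ (i, p i)))"
    by (rule det_def') auto
  also have "\<dots> = (\<Sum>p | p permutes {..<n}. of_int (sign p) * (\<Prod>i<n. F i (p i)))"
  proof (rule sum.cong)
    show "{p. p permutes {0..<n}} = {p. p permutes {..<n}}" by (simp add: atLeast0LessThan)
    fix p assume "p \<in> {p. p permutes {..<n}}"
    hence p: "p permutes {..<n}" by simp
    have "(\<Prod>i = 0..<n. Matrix.mat n n (\<lambda>(i,j). F i j) $$ (i, p i)) = (\<Prod>i<n. F i (p i))"
      unfolding atLeast0LessThan[symmetric]
      using permutes_in_image[OF p] by (intro prod.cong) auto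
    thus "of_int (sign p) * (\<Prod>i = 0..<n. Matrix.mat n n (\<lambda>(i,j). F i j) $$ (i, p i)) = of_int (sign p) * (\<Prod>i<n. F i (p i))" by simp
  qed
  finally show ?thesis unfolding det_nat_def .
qed

lemma tu_elementary:
  fixes M :: "real^'e^'r" and y :: "real^'e"
  assumes TU: "totally_unimodular M" and e0: "e0 \<in> C"
  and indep: "\<And>w. M *v w = 0 \<Longrightarrow> (\<forall>e. e \<notin> C - {e0} \<longrightarrow> w$e = 0) \<Longrightarrow> w = 0"
  and yf: "M *v y = 0" and ys: "\<forall>e. e \<notin> C \<longrightarrow> y$e = 0" and y1: "y$e0 = 1"
  shows "y$e \<in> {-1,0,1}"
proof -
  define D where "D = C - {e0}"
  define n where "n = card D"
  obtain f :: "nat \<Rightarrow> 'r" and g :: "nat \<Rightarrow> 'e" where f: "inj_on f {..<n}" and g: "bij_betw g {..<n} D"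
    and dA: "Determinant.det (Matrix.mat n n (\<lambda>(i,j). M$f i$g j)) \<noteq> 0"
    using rows_exist[of M D] indep unfolding D_def n_def by blast
  define A where "A = Matrix.mat n n (\<lambda>(i,j). M$f i$g j)"
  have A: "A \<in> carrier_mat n n" unfolding A_def by simp
  have ginj: "inj_on g {..<n}" using g bij_betw_imp_inj_on by blast
  have detA: "Determinant.det A \<in> {-1,1}"
    using dA TU f ginj unfolding A_def det_nat_eq totally_unimodular_def by auto
  show ?thesis
  proof (cases "e \<in> D")
    case False
    thus ?thesis using ys y1 unfolding D_def by (cases "e = e0") auto
  next
    case True
    then obtain k where k: "k < n" "e = g k" using g unfolding bij_betw_def by (metis imageE lessThan_iff)
    define x where "x = Matrix.vec n (\<lambda>j. - y $ g j)"
    have x: "x \<in> carrier_vec n" unfolding x_def by simp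
    have rowsum: "M$r$e0 + (\<Sum>e\<in>D. M$r$e * y$e) = 0" for r
    proof -
      have "0 = (M *v y) $ r" using yf by simp
      also have "\<dots> = (\<Sum>e\<in>UNIV. M$r$e * y$e)" by (simp add: matrix_vector_mult_def)
      also have "\<dots> = (\<Sum>e\<in>C. M$r$e * y$e)"
        using ys by (intro sum.mono_neutral_right) auto
      also have "\<dots> = M$r$e0 * y$e0 + (\<Sum>e\<in>D. M$r$e * y$e)"
        unfolding D_def using e0 by (simp add: sum.remove)
      finally show ?thesis using y1 by simp
    qed
    have Ax: "A *\<^sub>v x = Matrix.vec n (\<lambda>i. M $ f i $ e0)"
    proof (rule eq_vecI)
      fix i assume i: "i < dim_vec (Matrix.vec n (\<lambda>i. M $ f i $ e0))"
      hence i: "i < n" by simp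
      have "(A *\<^sub>v x) $ i = (\<Sum>j<n. M$f i$g j * (- y $ g j))"
        using i A x by (simp add: A_def x_def scalar_prod_def atLeast0LessThan)
      also have "\<dots> = - (\<Sum>e\<in>D. M$f i$e * y$e)"
        using sum.reindex_bij_betw[OF g, of "\<lambda>e. M$f i$e * y$e"] by (simp add: sum_negf)
      also have "\<dots> = M $ f i $ e0" using rowsum[of "f i"] by simp
      finally show "(A *\<^sub>v x) $ i = Matrix.vec n (\<lambda>i. M $ f i $ e0) $ i" using i by simp
    qed (use A in simp)
    define g' where "g' = g(k := e0)"
    have g'inj: "inj_on g' {..<n}"
    proof -
      have "e0 \<notin> g ` ({..<n} - {k})" using g unfolding bij_betw_def D_def by auto
      thus ?thesis unfolding g'_def using ginj k(1)
        by (auto simp: inj_on_def)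
    qed
    have rc: "replace_col A (A *\<^sub>v x) k = Matrix.mat n n (\<lambda>(i,j). M$f i$g' j)"
      unfolding Ax by (rule eq_matI) (auto simp: replace_col_def A_def g'_def)
    have "Determinant.det (replace_col A (A *\<^sub>v x) k) \<in> {-1,0,1}"
      unfolding rc det_nat_eq using TU f g'inj unfolding totally_unimodular_def by blast
    hence "x $ k * Determinant.det A \<in> {-1,0,1}" using cramer_lemma_mat[OF A x k(1)] by simp
    hence "- y $ e * Determinant.det A \<in> {-1,0,1}" using k by (simp add: x_def)
    thus ?thesis using detA by auto
  qed
qed


no_notation Matrix.vec_index (infixl \<open>$\<close> 100)
no_notation Matrix.scalar_prod (infix \<open>\<bullet>\<close> 70)

lemma min_conformal_indep:
  fixes M :: "real^'e^'r" and y z :: "real^'e"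
  defines "K \<equiv> {z. M *v z = 0 \<and> z \<noteq> 0 \<and> (\<forall>e. z$e * y$e \<ge> 0 \<and> (y$e = 0 \<longrightarrow> z$e = 0))}"
  assumes zK: "z \<in> K" and zmin: "\<And>z'. z' \<in> K \<Longrightarrow> card {e. z$e \<noteq> 0} \<le> card {e. z'$e \<noteq> 0}"
  and ze0: "z$e0 \<noteq> 0"
  and wf: "M *v w = 0" and wC: "\<forall>e. e \<notin> {e. z$e \<noteq> 0} - {e0} \<longrightarrow> w$e = 0"
  shows "w = 0"
proof (rule ccontr)
  assume "w \<noteq> 0"
  then obtain e1 where e1: "w$e1 \<noteq> 0" by (metis Finite_Cartesian_Product.vec_eq_iff zero_index)
  define w' where "w' = (if z$e1 / w$e1 > 0 then w else -w)"
  have w'f: "M *v w' = 0" using wf by (simp add: w'_def vec.neg)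
  have w'C: "\<forall>e. e \<notin> {e. z$e \<noteq> 0} - {e0} \<longrightarrow> w'$e = 0" using wC by (simp add: w'_def)
  have we1: "w'$e1 \<noteq> 0" using e1 by (simp add: w'_def)
  have ze1: "z$e1 \<noteq> 0" using we1 w'C by auto
  have r1: "z$e1 / w'$e1 > 0" using e1 ze1
    by (auto simp: w'_def divide_less_0_iff zero_less_divide_iff)
  define P where "P = {e. w'$e \<noteq> 0 \<and> z$e / w'$e > 0}"
  have P: "finite P" "P \<noteq> {}" using r1 we1 unfolding P_def by auto
  define t where "t = Min ((\<lambda>e. z$e / w'$e) ` P)"
  have "t \<in> (\<lambda>e. z$e / w'$e) ` P" unfolding t_def using P by (intro Min_in) auto
  then obtain em where em: "em \<in> P" "t = z$em / w'$em" by auto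
  have tle: "t \<le> z$e / w'$e" if "e \<in> P" for e using that P unfolding t_def by auto
  have tpos: "t > 0" using em P_def by auto
  define z' where "z' = z - t *\<^sub>R w'"
  have z'c: "z'$e * z$e \<ge> 0 \<and> (z$e = 0 \<longrightarrow> z'$e = 0)" for e
  proof (cases "w'$e = 0")
    case True thus ?thesis by (simp add: z'_def)
  next
    case False
    hence zne: "z$e \<noteq> 0" using w'C by auto
    define r where "r = z$e / w'$e"
    have zr: "z$e = r * w'$e" using False by (simp add: r_def)
    have "r \<noteq> 0" using zne zr by auto
    show ?thesis
    proof (cases "r > 0")
      case True
      hence "e \<in> P" using False unfolding P_def r_def by auto
      hence "t \<le> r" using tle r_def by auto
      hence "z'$e * z$e = r * (w'$e)^2 * (r - t)" by (simp add: z'_def zr power2_eq_square algebra_simps)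
      moreover have "r * (w'$e)^2 * (r - t) \<ge> 0" using True \<open>t \<le> r\<close> by simp
      ultimately show ?thesis using zne by simp
    next
      case False
      hence "r < 0" using \<open>r \<noteq> 0\<close> by simp
      have "z'$e * z$e = r\<^sup>2 * (w'$e)^2 - t * r * (w'$e)^2"
        by (simp add: z'_def zr power2_eq_square algebra_simps)
      moreover have "t * r * (w'$e)^2 \<le> 0" using tpos \<open>r < 0\<close>
        by (simp add: mult_pos_neg mult_nonpos_nonneg less_imp_le)
      ultimately show ?thesis using zne by (smt (verit) zero_le_power2 mult_nonneg_nonneg)
    qed
  qed
  have z'K: "z' \<in> K"
  proof -
    have "M *v z' = 0" using zK w'f unfolding K_def z'_def
      by (simp add: matrix_vector_mult_diff_distrib matrix_vector_mult_scaleR)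
    moreover have "z'$e0 \<noteq> 0" using w'C ze0 by (simp add: z'_def)
    hence "z' \<noteq> 0" by auto
    moreover have "z'$e * y$e \<ge> 0 \<and> (y$e = 0 \<longrightarrow> z'$e = 0)" for e
    proof -
      have zy: "z$e * y$e \<ge> 0" "y$e = 0 \<longrightarrow> z$e = 0" using zK unfolding K_def by auto
      show ?thesis
      proof (cases "z$e = 0")
        case True thus ?thesis using z'c[of e] by simp
      next
        case False
        have "(z'$e * y$e) * (z$e)^2 = (z'$e * z$e) * (z$e * y$e)" by (simp add: power2_eq_square)
        moreover have "(z'$e * z$e) * (z$e * y$e) \<ge> 0" using z'c[of e] zy by simp
        ultimately have "(z'$e * y$e) * (z$e)^2 \<ge> 0" by linarith
        hence "z'$e * y$e \<ge> 0" using False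
          by (metis zero_le_mult_iff zero_less_power2 not_less)
        thus ?thesis using zy False by auto
      qed
    qed
    ultimately show ?thesis unfolding K_def by auto
  qed
  have "{e. z'$e \<noteq> 0} \<subset> {e. z$e \<noteq> 0}"
  proof -
    have "{e. z'$e \<noteq> 0} \<subseteq> {e. z$e \<noteq> 0}" using z'c by auto
    moreover have "z'$em = 0" using em P_def by (simp add: z'_def)
    moreover have "z$em \<noteq> 0" using em P_def by auto
    ultimately show ?thesis by auto
  qed
  hence "card {e. z'$e \<noteq> 0} < card {e. z$e \<noteq> 0}" by (rule psubset_card_mono[rotated]) simp
  with zmin[OF z'K] show False by simp
qed


lemma l1_bound:
  fixes M :: "real^'e^'r" and x :: "real^'e"
  assumes TU: "totally_unimodular M"
  and eul: "\<And>\<gamma>. M *v \<gamma> = 0 \<Longrightarrow> (\<forall>e. \<gamma>$e \<in> {-1,0,1}) \<Longrightarrow> 2 * inner x \<gamma> \<le> (\<Sum>e\<in>UNIV. \<bar>\<gamma>$e\<bar>)"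
  shows "M *v y = 0 \<Longrightarrow> 2 * inner x y \<le> (\<Sum>e\<in>UNIV. \<bar>y$e\<bar>)"
proof (induction "card {e. y$e \<noteq> 0}" arbitrary: y rule: less_induct)
  case less
  show ?case
  proof (cases "y = 0")
    case True thus ?thesis by simp
  next
    case False
    define K where "K = {z. M *v z = 0 \<and> z \<noteq> 0 \<and> (\<forall>e. z$e * y$e \<ge> 0 \<and> (y$e = 0 \<longrightarrow> z$e = 0))}"
    have "y \<in> K" unfolding K_def using less.prems False by auto
    then obtain z where zK: "z \<in> K" and zmin: "\<And>z'. z' \<in> K \<Longrightarrow> card {e. z$e \<noteq> 0} \<le> card {e. z'$e \<noteq> 0}"
      using ex_has_least_nat[of "\<lambda>z. z \<in> K" y "\<lambda>z. card {e. z$e \<noteq> 0}"] by blast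
    have zf: "M *v z = 0" and zn: "z \<noteq> 0" and zy: "\<And>e. z$e * y$e \<ge> 0" "\<And>e. y$e = 0 \<Longrightarrow> z$e = 0"
      using zK unfolding K_def by auto
    obtain e0 where ze0: "z$e0 \<noteq> 0" using zn by (metis Finite_Cartesian_Product.vec_eq_iff zero_index)
    define C where "C = {e. z$e \<noteq> 0}"
    have indep: "\<And>w. M *v w = 0 \<Longrightarrow> (\<forall>e. e \<notin> C - {e0} \<longrightarrow> w$e = 0) \<Longrightarrow> w = 0"
      using min_conformal_indep[of z M y, OF _ _ ze0] zK zmin unfolding K_def C_def by blast
    define \<gamma> where "\<gamma> = (1 / z$e0) *\<^sub>R z"
    have g01: "\<gamma>$e \<in> {-1,0,1}" for e
    proof (rule tu_elementary[OF TU _ indep])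
      show "e0 \<in> C" using ze0 C_def by simp
      show "M *v \<gamma> = 0" using zf by (simp add: \<gamma>_def matrix_vector_mult_scaleR)
      show "\<forall>e. e \<notin> C \<longrightarrow> \<gamma>$e = 0" by (simp add: \<gamma>_def C_def)
      show "\<gamma>$e0 = 1" using ze0 by (simp add: \<gamma>_def)
    qed
    define c where "c = \<bar>z$e0\<bar>"
    define \<gamma>' where "\<gamma>' = (1 / c) *\<^sub>R z"
    have cpos: "c > 0" using ze0 c_def by simp
    have g'eq: "\<gamma>'$e = (z$e0 / c) * \<gamma>$e" for e using ze0 by (simp add: \<gamma>'_def \<gamma>_def)
    have sg: "z$e0 / c = 1 \<or> z$e0 / c = -1" using ze0 unfolding c_def by (auto simp: abs_if)
    have g'01: "\<gamma>'$e \<in> {-1,0,1}" for e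
    proof -
      have "\<gamma>'$e = \<gamma>$e \<or> \<gamma>'$e = - \<gamma>$e" using sg g'eq[of e] by (metis mult_1 mult_minus1)
      thus ?thesis using g01[of e] by auto
    qed
    have g'f: "M *v \<gamma>' = 0" using zf by (simp add: \<gamma>'_def matrix_vector_mult_scaleR)
    have g'y: "\<gamma>'$e * y$e \<ge> 0" for e
      using zy(1)[of e] cpos by (simp add: \<gamma>'_def)
    have g'C: "\<gamma>'$e \<noteq> 0 \<longleftrightarrow> e \<in> C" for e using cpos by (simp add: \<gamma>'_def C_def)
    have Cy: "C \<subseteq> {e. y$e \<noteq> 0}" using zy(2) C_def by auto
    have Cne: "C \<noteq> {}" using ze0 C_def by auto
    define s where "s = Min ((\<lambda>e. \<bar>y$e\<bar>) ` C)"
    have "s \<in> (\<lambda>e. \<bar>y$e\<bar>) ` C" unfolding s_def using Cne by (intro Min_in) auto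
    then obtain em where em: "em \<in> C" "s = \<bar>y$em\<bar>" by auto
    have sle: "s \<le> \<bar>y$e\<bar>" if "e \<in> C" for e using that unfolding s_def by auto
    have spos: "s > 0" using em Cy by auto
    define y'' where "y'' = y - s *\<^sub>R \<gamma>'"
    have y''f: "M *v y'' = 0" using less.prems g'f
      by (simp add: y''_def matrix_vector_mult_diff_distrib matrix_vector_mult_scaleR)
    have coord: "\<bar>y$e\<bar> = \<bar>y''$e\<bar> + s * \<bar>\<gamma>'$e\<bar> \<and> (y$e = 0 \<longrightarrow> y''$e = 0)" for e
    proof (cases "e \<in> C")
      case False
      hence "\<gamma>'$e = 0" using g'C by blast
      thus ?thesis by (simp add: y''_def)
    next
      case True
      have ye: "y$e \<noteq> 0" using True Cy by auto
      have se: "s \<le> \<bar>y$e\<bar>" using sle True by simp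
      have "\<gamma>'$e = 1 \<or> \<gamma>'$e = -1" using g'01[of e] g'C[of e] True by auto
      thus ?thesis
      proof
        assume g1: "\<gamma>'$e = 1"
        hence "y$e > 0" using g'y[of e] ye by simp
        thus ?thesis using g1 se ye by (simp add: y''_def)
      next
        assume g1: "\<gamma>'$e = -1"
        hence "y$e < 0" using g'y[of e] ye by simp
        thus ?thesis using g1 se ye by (simp add: y''_def)
      qed
    qed
    have "{e. y''$e \<noteq> 0} \<subset> {e. y$e \<noteq> 0}"
    proof -
      have "{e. y''$e \<noteq> 0} \<subseteq> {e. y$e \<noteq> 0}" using coord by auto
      moreover have "\<gamma>'$em \<noteq> 0" using em g'C by blast
      hence "\<bar>\<gamma>'$em\<bar> = 1" using g'01[of em] by auto
      hence "y''$em = 0" using coord[of em] em by simp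
      moreover have "y$em \<noteq> 0" using em Cy by auto
      ultimately show ?thesis by auto
    qed
    hence "card {e. y''$e \<noteq> 0} < card {e. y$e \<noteq> 0}" by (rule psubset_card_mono[rotated]) simp
    hence IH: "2 * inner x y'' \<le> (\<Sum>e\<in>UNIV. \<bar>y''$e\<bar>)" using less.hyps y''f by blast
    have G: "2 * inner x \<gamma>' \<le> (\<Sum>e\<in>UNIV. \<bar>\<gamma>'$e\<bar>)" using eul[OF g'f] g'01 by blast
    have "y = y'' + s *\<^sub>R \<gamma>'" by (simp add: y''_def)
    hence "2 * inner x y = 2 * inner x y'' + s * (2 * inner x \<gamma>')"
      by (simp add: inner_add_right algebra_simps)
    also have "\<dots> \<le> (\<Sum>e\<in>UNIV. \<bar>y''$e\<bar>) + s * (\<Sum>e\<in>UNIV. \<bar>\<gamma>'$e\<bar>)"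
      using IH G spos by (intro add_mono mult_left_mono) auto
    also have "\<dots> = (\<Sum>e\<in>UNIV. \<bar>y$e\<bar>)"
      using coord by (simp add: sum_distrib_left sum.distrib[symmetric])
    finally show ?thesis .
  qed
qed

theorem mainTheorem12:
  fixes M :: "real^'e^'r" and lam mu :: "real^'e"
  assumes "totally_unimodular M"
    and "lam \<in> lattice_circuits M" and "mu \<in> lattice_circuits M"
    and "voronoi0 M \<inter> facet_hyp M lam \<inter> facet_hyp M mu \<noteq> {}"
  shows "\<forall>e. lam $ e * mu $ e \<ge> 0"
proof -
  obtain x where xV: "x \<in> voronoi0 M" and xl: "x \<in> facet_hyp M lam" and xm: "x \<in> facet_hyp M mu"
    using assms(4) by blast
  have sqabs: "norm g ^ 2 = (\<Sum>e\<in>UNIV. \<bar>g$e\<bar>)" if "\<forall>e. g$e \<in> {-1,0,1}" for g :: "real^'e"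
  proof -
    have "norm g ^ 2 = (\<Sum>e\<in>UNIV. g$e * g$e)" by (simp add: power2_norm_eq_inner inner_vec_def)
    also have "\<dots> = (\<Sum>e\<in>UNIV. \<bar>g$e\<bar>)"
    proof (intro sum.cong refl)
      fix e show "g$e * g$e = \<bar>g$e\<bar>" using that[rule_format, of e] by auto
    qed
    finally show ?thesis .
  qed
  have eul: "2 * inner x g \<le> (\<Sum>e\<in>UNIV. \<bar>g$e\<bar>)" if gf: "M *v g = 0" and g01: "\<forall>e. g$e \<in> {-1,0,1}" for g
  proof -
    have "g \<in> flow_lattice M" using gf g01 unfolding flow_lattice_def flows_def
    proof (auto)
      fix e have "g$e \<in> {-1,0,1}" using g01 by blast
      thus "g$e \<in> \<int>" by auto
    qed
    hence "norm x \<le> norm (x - g)" using xV unfolding voronoi0_def by blast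
    hence "norm x ^ 2 \<le> norm (x - g) ^ 2" by (simp add: power_mono)
    hence "2 * inner x g \<le> norm g ^ 2"
      by (simp add: power2_norm_eq_inner inner_diff_left inner_diff_right inner_commute)
    thus ?thesis using sqabs[OF g01] by simp
  qed
  have lf: "M *v lam = 0" and l01: "\<forall>e. lam$e \<in> {-1,0,1}"
    using assms(2) unfolding lattice_circuits_def eulerian_def flow_lattice_def flows_def by auto
  have mf: "M *v mu = 0" and m01: "\<forall>e. mu$e \<in> {-1,0,1}"
    using assms(3) unfolding lattice_circuits_def eulerian_def flow_lattice_def flows_def by auto
  have "2 * inner x (lam + mu) \<le> (\<Sum>e\<in>UNIV. \<bar>(lam + mu)$e\<bar>)"
  proof -
    have "M *v (lam + mu) = 0" using lf mf by (simp add: matrix_vector_right_distrib)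
    thus ?thesis using l1_bound[OF assms(1) eul, of "lam + mu"] by simp
  qed
  moreover have "2 * inner x lam = (\<Sum>e\<in>UNIV. \<bar>lam$e\<bar>)"
    using xl sqabs[OF l01] unfolding facet_hyp_def by simp
  moreover have "2 * inner x mu = (\<Sum>e\<in>UNIV. \<bar>mu$e\<bar>)"
    using xm sqabs[OF m01] unfolding facet_hyp_def by simp
  ultimately have "(\<Sum>e\<in>UNIV. \<bar>lam$e\<bar> + \<bar>mu$e\<bar> - \<bar>lam$e + mu$e\<bar>) \<le> 0"
    by (simp add: inner_add_right sum.distrib sum_subtractf)
  moreover have "\<forall>e\<in>UNIV. \<bar>lam$e\<bar> + \<bar>mu$e\<bar> - \<bar>lam$e + mu$e\<bar> \<ge> 0" by (simp add: abs_triangle_ineq)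
  ultimately have Z: "\<forall>e\<in>UNIV. \<bar>lam$e\<bar> + \<bar>mu$e\<bar> - \<bar>lam$e + mu$e\<bar> = 0"
    using sum_nonneg_eq_0_iff[of UNIV "\<lambda>e. \<bar>lam$e\<bar> + \<bar>mu$e\<bar> - \<bar>lam$e + mu$e\<bar>"]
    by (simp add: antisym sum_nonneg)
  show ?thesis
  proof
    fix e
    have a: "\<bar>lam$e\<bar> + \<bar>mu$e\<bar> - \<bar>lam$e + mu$e\<bar> = 0" using Z by blast
    have "lam$e \<in> {-1,0,1}" "mu$e \<in> {-1,0,1}" using l01 m01 by blast+
    thus "lam$e * mu$e \<ge> 0" using a by auto
  qed
qed

end
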